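(* Let $L_0\in\mathbb{R}^{n\times n}$ have reduced SVD $L_0=U\Sigma V^*$, let $\lambda>0$, let $\Omega_{\mathrm{obs}}\subset[n]\times[n]$, let $\Omega\subset\Omega_{\mathrm{obs}}$, let $\Gamma=\Omega_{\mathrm{obs}}\setminus\Omega$, and let $S_0'$ be a matrix supported on $\Omega$. Assume $\|\mathcal{P}_{\Gamma^\perp}\mathcal{P}_T\|<1$. Then $(L_0,S_0')$ is the unique solution of \[ \text{minimize } \|L\|_*+\lambda\|S\|_1\quad\text{subject to}\quad\mathcal{P}_{\Omega_{\mathrm{obs}}}(L+S)=\mathcal{P}_{\Omega_{\mathrm{obs}}}L_0+S_0' \] if there is a pair $(W,F)$ obeying \[ UV^*+W=\lambda(\mathrm{sgn}(S_0')+F), \] with $\mathcal{P}_TW=0$, $\|W\|<1$, $\mathcal{P}_{\Gamma^\perp}F=0$ and $\|F\|_\infty<1$.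
   Context: $U,V\in\mathbb{R}^{n\times r}$ have orthonormal columns; $T=\{UX^*+YV^*: X,Y\in\mathbb{R}^{n\times r}\}$ and $\mathcal{P}_T$ is the orthogonal projection onto $T$ (trace inner product). For an index set $A$, $\mathcal{P}_A$ keeps entries in $A$ and zeroes the rest; $\mathcal{P}_{\Gamma^\perp}=\mathcal{I}-\mathcal{P}_\Gamma$ keeps the entries outside $\Gamma$. $\|\mathcal{P}_{\Gamma^\perp}\mathcal{P}_T\|$ is the operator norm w.r.t. the Frobenius norm; $\|W\|$ is the spectral norm, $\|F\|_\infty=\max_{ij}|F_{ij}|$, $\|\cdot\|_*$ the nuclear norm, $\|S\|_1=\sum_{ij}|S_{ij}|$, $\mathrm{sgn}$ the entrywise sign with $\mathrm{sgn}(0)=0$. *)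

theory Defs
  imports "HOL-Analysis.Analysis"
begin

text \<open>Square real n x n matrices are rendered as real^'n^'n with 'n a finite index type.
  The Euclidean inner product / norm on real^'n^'n is exactly the trace inner product /
  Frobenius norm.\<close>

type_synonym 'n sqmat = "real^'n^'n"

definition tangent_space :: "'n::finite sqmat \<Rightarrow> 'n sqmat \<Rightarrow> 'n sqmat set" where
  "tangent_space U V = {U ** transpose X + Y ** transpose V | X Y. True}"

definition orth_proj :: "'n::finite sqmat set \<Rightarrow> 'n sqmat \<Rightarrow> 'n sqmat" where
  "orth_proj T M = (THE P. P \<in> T \<and> (\<forall>Z\<in>T. inner (M - P) Z = 0))"

definition P_T :: "'n::finite sqmat \<Rightarrow> 'n sqmat \<Rightarrow> 'n sqmat \<Rightarrow> 'n sqmat" where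
  "P_T U V = orth_proj (tangent_space U V)"

definition P_idx :: "('n::finite \<times> 'n) set \<Rightarrow> 'n sqmat \<Rightarrow> 'n sqmat" where
  "P_idx A M = (\<chi> i j. if (i, j) \<in> A then M $ i $ j else 0)"

definition spec_norm :: "'n::finite sqmat \<Rightarrow> real" where
  "spec_norm W = onorm (\<lambda>x. W *v x)"

definition max_norm :: "'n::finite sqmat \<Rightarrow> real" where
  "max_norm F = Max {\<bar>F $ i $ j\<bar> | i j. True}"

definition l1_norm :: "'n::finite sqmat \<Rightarrow> real" where
  "l1_norm S = (\<Sum>i\<in>UNIV. \<Sum>j\<in>UNIV. \<bar>S $ i $ j\<bar>)"

definition sgn_mat :: "'n::finite sqmat \<Rightarrow> 'n sqmat" where
  "sgn_mat S = (\<chi> i j. sgn (S $ i $ j))"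

definition psd :: "'n::finite sqmat \<Rightarrow> bool" where
  "psd P \<longleftrightarrow> transpose P = P \<and> (\<forall>x. 0 \<le> x \<bullet> (P *v x))"

text \<open>Nuclear norm ||A||_* = tr sqrt(A^* A) (= sum of singular values).\<close>
definition nuc_norm :: "'n::finite sqmat \<Rightarrow> real" where
  "nuc_norm A = trace (THE P. psd P \<and> P ** P = transpose A ** A)"

text \<open>Reduced SVD L0 = U Sigma V^* with r = card K columns: the columns of U, V indexed by K
  are orthonormal, all other columns are zero, and Sigma is diagonal with positive
  entries exactly on K (so r = 0, i.e. L0 = 0, is allowed).\<close>
definition reduced_svd :: "'n::finite sqmat \<Rightarrow> 'n set \<Rightarrow> 'n sqmat \<Rightarrow> 'n sqmat \<Rightarrow> 'n sqmat \<Rightarrow> bool" where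
  "reduced_svd L K U Sig V \<longleftrightarrow>
     (\<forall>k\<in>K. \<forall>l\<in>K. column k U \<bullet> column l U = (if k = l then 1 else 0)) \<and>
     (\<forall>k\<in>K. \<forall>l\<in>K. column k V \<bullet> column l V = (if k = l then 1 else 0)) \<and>
     (\<forall>k. k \<notin> K \<longrightarrow> column k U = 0 \<and> column k V = 0) \<and>
     (\<forall>i j. Sig $ i $ j = (if i = j \<and> i \<in> K then Sig $ i $ i else 0)) \<and>
     (\<forall>k\<in>K. Sig $ k $ k > 0) \<and>
     L = U ** Sig ** transpose V"

definition feasible :: "('n::finite \<times> 'n) set \<Rightarrow> 'n sqmat \<Rightarrow> 'n sqmat \<Rightarrow> 'n sqmat \<Rightarrow> 'n sqmat \<Rightarrow> bool" where
  "feasible Obs L0 S0 L S \<longleftrightarrow> P_idx Obs (L + S) = P_idx Obs L0 + S0"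

definition objective :: "real \<Rightarrow> 'n::finite sqmat \<Rightarrow> 'n sqmat \<Rightarrow> real" where
  "objective lam L S = nuc_norm L + lam * l1_norm S"

definition unique_solution ::
  "real \<Rightarrow> ('n::finite \<times> 'n) set \<Rightarrow> 'n sqmat \<Rightarrow> 'n sqmat \<Rightarrow> 'n sqmat \<Rightarrow> 'n sqmat \<Rightarrow> bool" where
  "unique_solution lam Obs L0 S0 L' S' \<longleftrightarrow>
     feasible Obs L0 S0 L' S' \<and>
     (\<forall>L S. feasible Obs L0 S0 L S \<longrightarrow> objective lam L' S' \<le> objective lam L S) \<and>
     (\<forall>L S. feasible Obs L0 S0 L S \<and> objective lam L S = objective lam L' S' \<longrightarrow> L = L' \<and> S = S')"

end

theory Submission
  imports Defs
begin


lemma tmv_inner: "(transpose A *v x) \<bullet> y = x \<bullet> ((A::real^'n^'m) *v y)"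
  by (metis dot_lmul_matrix transpose_matrix_vector)

lemma mv_inner: "((A::real^'n^'m) *v x) \<bullet> y = x \<bullet> (transpose A *v y)"
  by (metis tmv_inner transpose_transpose)

lemma sym_inner: "transpose A = A \<Longrightarrow> ((A::real^'n^'n) *v x) \<bullet> y = x \<bullet> (A *v y)"
  by (metis tmv_inner)

lemma max_eigen:
  fixes A :: "real^'n^'n"
  assumes sym: "transpose A = A" and S: "subspace S" and inv: "\<forall>x\<in>S. A *v x \<in> S"
    and x0: "x0 \<in> S" "norm x0 = 1"
    and mx: "\<forall>z\<in>S. norm z = 1 \<longrightarrow> z \<bullet> (A *v z) \<le> x0 \<bullet> (A *v x0)"
  shows "A *v x0 = (x0 \<bullet> (A *v x0)) *\<^sub>R x0"
proof (rule ccontr)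
  define l where "l = x0 \<bullet> (A *v x0)"
  define y where "y = A *v x0 - l *\<^sub>R x0"
  assume "A *v x0 \<noteq> (x0 \<bullet> (A *v x0)) *\<^sub>R x0"
  hence yne: "y \<noteq> 0" by (simp add: y_def l_def)
  have x0x0: "x0 \<bullet> x0 = 1" using x0(2) by (simp add: norm_eq_1)
  have yS: "y \<in> S" unfolding y_def using S inv x0(1) by (simp add: subspace_diff subspace_scale)
  have x0y: "x0 \<bullet> y = 0" by (simp add: y_def l_def inner_diff_right x0x0)
  hence yx0: "y \<bullet> x0 = 0" by (simp add: inner_commute)
  have hom: "z \<bullet> (A *v z) \<le> l * (z \<bullet> z)" if "z \<in> S" for z
  proof (cases "z = 0")
    case True then show ?thesis by simp
  next
    case False
    define u where "u = (1 / norm z) *\<^sub>R z"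
    have "u \<in> S" using that S by (simp add: u_def subspace_scale)
    moreover have "norm u = 1" using False by (simp add: u_def)
    ultimately have "u \<bullet> (A *v u) \<le> l" using mx l_def by blast
    moreover have "u \<bullet> (A *v u) = (z \<bullet> (A *v z)) / (norm z)^2"
      by (simp add: u_def matrix_vector_mult_scaleR power2_eq_square)
    moreover have "(norm z)^2 = z \<bullet> z" by (simp add: power2_norm_eq_inner)
    moreover have "norm z > 0" using False by simp
    ultimately show ?thesis by (simp add: divide_le_eq mult.commute)
  qed
  define a where "a = y \<bullet> y"
  define b where "b = y \<bullet> (A *v y)"
  have apos: "a > 0" using yne by (simp add: a_def)
  have yAx0: "y \<bullet> (A *v x0) = a"
  proof -
    have e1: "(A *v x0) \<bullet> x0 = l" by (simp add: l_def inner_commute)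
    have e2: "x0 \<bullet> (A *v x0) = l" by (simp add: l_def)
    show ?thesis by (simp add: a_def y_def inner_diff_right inner_diff_left e1 e2 x0x0 algebra_simps)
  qed
  have key: "l + 2 * t * a + t^2 * b \<le> l * (1 + t^2 * a)" for t
  proof -
    have "x0 + t *\<^sub>R y \<in> S" using S x0 yS by (simp add: subspace_add subspace_scale)
    hence "(x0 + t *\<^sub>R y) \<bullet> (A *v (x0 + t *\<^sub>R y)) \<le> l * ((x0 + t *\<^sub>R y) \<bullet> (x0 + t *\<^sub>R y))"
      by (rule hom)
    moreover have "(x0 + t *\<^sub>R y) \<bullet> (A *v (x0 + t *\<^sub>R y)) = l + 2 * t * a + t^2 * b"
    proof -
      have "x0 \<bullet> (A *v y) = y \<bullet> (A *v x0)" by (metis sym sym_inner inner_commute)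
      thus ?thesis
        by (simp add: matrix_vector_right_distrib matrix_vector_mult_scaleR inner_add_left
            inner_add_right l_def b_def yAx0 power2_eq_square algebra_simps)
    qed
    moreover have "(x0 + t *\<^sub>R y) \<bullet> (x0 + t *\<^sub>R y) = 1 + t^2 * a"
      by (simp add: inner_add_left inner_add_right x0x0 yx0 inner_commute[of x0 y] a_def power2_eq_square)
    ultimately show ?thesis by simp
  qed
  define c where "c = \<bar>l * a - b\<bar> + 1"
  define t where "t = a / c"
  have cpos: "c > 0" by (simp add: c_def)
  have tpos: "t > 0" using apos cpos by (simp add: t_def)
  from key[of t] have "2 * t * a \<le> t^2 * (l * a - b)" by (simp add: algebra_simps)
  hence "2 * a \<le> t * (l * a - b)" using tpos by (simp add: power2_eq_square mult.assoc)
  also have "\<dots> \<le> t * (c - 1)" using tpos by (intro mult_left_mono) (auto simp: c_def)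
  also have "\<dots> < a" using tpos cpos apos by (simp add: t_def field_simps)
  finally show False using apos by simp
qed

lemma eigenbasis:
  fixes A :: "real^'n^'n"
  assumes sym: "transpose A = A"
  shows "subspace S \<Longrightarrow> (\<forall>x\<in>S. A *v x \<in> S) \<Longrightarrow>
    \<exists>B. B \<subseteq> S \<and> pairwise orthogonal B \<and> (\<forall>x\<in>B. norm x = 1) \<and> span B = S \<and>
        (\<forall>x\<in>B. A *v x = (x \<bullet> (A *v x)) *\<^sub>R x)"
proof (induction "dim S" arbitrary: S rule: less_induct)
  case less
  show ?case
  proof (cases "S = {0}")
    case True
    then show ?thesis by (intro exI[of _ "{}"]) auto
  next
    case False
    then obtain v where v: "v \<in> S" "v \<noteq> 0" using less.prems(1) subspace_0 by blast
    define C where "C = S \<inter> sphere 0 1"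
    have "(1 / norm v) *\<^sub>R v \<in> C" using v less.prems(1) by (simp add: C_def subspace_scale)
    hence Cne: "C \<noteq> {}" by blast
    have Ccomp: "compact C" unfolding C_def
      by (intro closed_Int_compact closed_subspace less.prems(1) compact_sphere)
    have "continuous_on C (\<lambda>z. z \<bullet> (A *v z))"
      by (intro continuous_intros linear_continuous_on matrix_vector_mul_linear[unfolded linear_conv_bounded_linear])
    from continuous_attains_sup[OF Ccomp Cne this] obtain x0 where
      x0: "x0 \<in> C" and mx: "\<forall>z\<in>C. z \<bullet> (A *v z) \<le> x0 \<bullet> (A *v x0)" by blast
    have x0S: "x0 \<in> S" and nx0: "norm x0 = 1" using x0 by (auto simp: C_def)
    have x0x0: "x0 \<bullet> x0 = 1" using nx0 by (simp add: norm_eq_1)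
    define l where "l = x0 \<bullet> (A *v x0)"
    have eig: "A *v x0 = l *\<^sub>R x0"
      unfolding l_def by (rule max_eigen[OF sym less.prems x0S nx0]) (use mx in \<open>auto simp: C_def\<close>)
    define S' where "S' = S \<inter> {y. orthogonal x0 y}"
    have S'sub: "subspace S'" unfolding S'_def
      using subspace_inter[OF less.prems(1) subspace_orthogonal_to_vector[of x0]] by simp
    have S'inv: "\<forall>x\<in>S'. A *v x \<in> S'"
    proof
      fix x assume x: "x \<in> S'"
      have "x0 \<bullet> (A *v x) = (A *v x0) \<bullet> x" by (metis sym sym_inner)
      also have "\<dots> = 0" using x by (simp add: eig S'_def orthogonal_def)
      finally show "A *v x \<in> S'" using x less.prems(2) by (auto simp: S'_def orthogonal_def)
    qed
    have "x0 \<notin> S'" using x0x0 by (simp add: S'_def orthogonal_def)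
    hence "S' \<subset> S" using x0S by (auto simp: S'_def)
    hence "dim S' < dim S" using S'sub less.prems(1) by (metis dim_psubset span_eq_iff)
    from less.hyps[OF this S'sub S'inv] obtain B where
      B: "B \<subseteq> S'" "pairwise orthogonal B" "\<forall>x\<in>B. norm x = 1" "span B = S'"
        "\<forall>x\<in>B. A *v x = (x \<bullet> (A *v x)) *\<^sub>R x" by blast
    show ?thesis
    proof (intro exI[of _ "insert x0 B"] conjI)
      show "insert x0 B \<subseteq> S" using B(1) x0S by (auto simp: S'_def)
      show "pairwise orthogonal (insert x0 B)"
        using B(1,2) by (auto simp: pairwise_insert S'_def orthogonal_commute)
      show "\<forall>x\<in>insert x0 B. norm x = 1" using B(3) nx0 by auto
      show "\<forall>x\<in>insert x0 B. A *v x = (x \<bullet> (A *v x)) *\<^sub>R x"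
        using B(5) eig by (auto simp: l_def)
      show "span (insert x0 B) = S"
      proof
        show "span (insert x0 B) \<subseteq> S"
          using B(1) x0S less.prems(1) by (intro span_minimal) (auto simp: S'_def)
        show "S \<subseteq> span (insert x0 B)"
        proof
          fix y assume y: "y \<in> S"
          have "y - (x0 \<bullet> y) *\<^sub>R x0 \<in> S'"
            using y x0S less.prems(1) x0x0
            by (auto simp: S'_def orthogonal_def subspace_diff subspace_scale inner_diff_right)
          thus "y \<in> span (insert x0 B)" unfolding span_breakdown_eq B(4)[symmetric]
            by (auto simp: scalar_mult_eq_scaleR)
        qed
      qed
    qed
  qed
qed

lemma spectral:
  fixes A :: "real^'n^'n"
  assumes sym: "transpose A = A"
  shows "\<exists>(Q::real^'n^'n) \<mu>. transpose Q ** Q = mat 1 \<and> Q ** transpose Q = mat 1 \<and>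
           (\<forall>j. A *v column j Q = \<mu> j *\<^sub>R column j Q)"
proof -
  obtain B where B: "pairwise orthogonal B" "\<forall>x\<in>B. norm x = 1" "span B = UNIV"
        "\<forall>x\<in>B. A *v x = (x \<bullet> (A *v x)) *\<^sub>R x"
    using eigenbasis[OF sym, of UNIV] by auto
  have "0 \<notin> B" using B(2) by force
  hence ind: "independent B" using B(1) pairwise_orthogonal_independent by blast
  hence "card B = dim (UNIV :: (real^'n) set)" using B(3) by (metis indep_card_eq_dim_span)
  hence cB: "card B = CARD('n)" by simp
  have "finite B" using ind by (metis finiteI_independent)
  then obtain f where f: "bij_betw f (UNIV::'n set) B"
    using cB by (metis finite_class.finite_UNIV finite_same_card_bij)
  have [simp]: "\<And>i. norm (f i) = 1"
    using bij_betwE [OF f] B(2) by blast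
  have [simp]: "\<And>i j. i \<noteq> j \<Longrightarrow> orthogonal (f i) (f j)"
    using B(1) f by (auto simp: pairwise_def bij_betw_def inj_on_def)
  define Q where "Q = (\<chi> i j. f j $ i)"
  have cQ: "column j Q = f j" for j by (simp add: Q_def column_def vec_eq_iff)
  have "orthogonal_matrix Q"
    by (simp add: orthogonal_matrix_orthonormal_columns cQ)
  hence "transpose Q ** Q = mat 1 \<and> Q ** transpose Q = mat 1" by (simp add: orthogonal_matrix_def)
  moreover have "\<forall>j. A *v column j Q = (f j \<bullet> (A *v f j)) *\<^sub>R column j Q"
    using B(4) bij_betwE[OF f] by (simp add: cQ)
  ultimately show ?thesis
    apply -
    apply (rule exI[where x=Q])
    apply (rule exI[where x="\<lambda>j. f j \<bullet> (A *v f j)"])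
    by blast
qed



lemma col_mult: "column j (X ** Y) = X *v column j (Y::real^'c^'b)"
  by (simp add: column_def matrix_matrix_mult_def matrix_vector_mult_def vec_eq_iff)

lemma tmult_entry: "(transpose X ** Y) $ i $ j = column i X \<bullet> column j (Y::real^'c^'b)"
  by (simp add: column_def matrix_matrix_mult_def transpose_def inner_vec_def mult.commute)

lemma mat_eq_cols: "(\<And>j. column j X = column j Y) \<Longrightarrow> X = (Y::real^'c^'b)"
  by (simp add: column_def vec_eq_iff)

lemma trace_tmult: "trace (transpose X ** Y) = (\<Sum>i\<in>UNIV. column i X \<bullet> column i (Y::real^'c^'b))"
  by (simp add: trace_def tmult_entry)

lemma inner_trace: "X \<bullet> Y = trace (transpose X ** (Y::real^'c^'b))"
proof -
  have "X \<bullet> Y = (\<Sum>i\<in>UNIV. \<Sum>j\<in>UNIV. X$i$j * Y$i$j)" by (simp add: inner_vec_def)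
  also have "\<dots> = (\<Sum>j\<in>UNIV. \<Sum>i\<in>UNIV. X$i$j * Y$i$j)" by (rule sum.swap)
  also have "\<dots> = trace (transpose X ** Y)" by (simp add: trace_tmult inner_vec_def column_def)
  finally show ?thesis .
qed

lemma mm_diff_l: "(A::real^'c^'b) ** (B - C) = A ** B - A ** C"
  by (simp add: matrix_matrix_mult_def vec_eq_iff sum_subtractf algebra_simps)
lemma mm_diff_r: "((B::real^'c^'b) - C) ** A = B ** A - C ** A"
  by (simp add: matrix_matrix_mult_def vec_eq_iff sum_subtractf algebra_simps)
lemma mm_add_r: "((B::real^'c^'b) + C) ** A = B ** A + C ** A"
  by (simp add: matrix_matrix_mult_def vec_eq_iff sum.distrib algebra_simps)
lemma transpose_diff: "transpose ((A::real^'c^'b) - B) = transpose A - transpose B"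
  by (simp add: transpose_def vec_eq_iff)
lemma transpose_add: "transpose ((A::real^'c^'b) + B) = transpose A + transpose B"
  by (simp add: transpose_def vec_eq_iff)

section \<open>Square roots\<close>

lemma psd_null:
  assumes P: "psd P" and x: "x \<bullet> (P *v x) = 0"
  shows "P *v x = 0"
proof (rule ccontr)
  assume ne: "P *v x \<noteq> 0"
  define y where "y = P *v x"
  define a where "a = y \<bullet> y"
  define c where "c = y \<bullet> (P *v y)"
  have apos: "a > 0" using ne by (simp add: a_def y_def)
  have sym: "transpose P = P" using P by (simp add: psd_def)
  have xPy: "x \<bullet> (P *v y) = a" using sym_inner[OF sym, of x y] by (simp add: a_def y_def)
  have yPx: "y \<bullet> (P *v x) = a" by (simp add: a_def y_def)
  have nn: "0 \<le> t * (2 * a + t * c)" for t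
  proof -
    have "0 \<le> (x + t *\<^sub>R y) \<bullet> (P *v (x + t *\<^sub>R y))" using P by (simp add: psd_def)
    also have "\<dots> = x \<bullet> (P *v x) + t * (x \<bullet> (P *v y)) + t * (y \<bullet> (P *v x)) + t * t * (y \<bullet> (P *v y))"
    proof -
      have "P *v (x + t *\<^sub>R y) = P *v x + t *\<^sub>R (P *v y)"
        by (simp add: matrix_vector_right_distrib matrix_vector_mult_scaleR)
      thus ?thesis by (simp add: inner_add_left inner_add_right distrib_left)
    qed
    also have "\<dots> = t * (2 * a + t * c)"
      by (simp only: x xPy yPx c_def[symmetric]) (simp add: algebra_simps)
    finally show ?thesis .
  qed
  define t where "t = - a / (\<bar>c\<bar> + 1)"
  have cp: "\<bar>c\<bar> + 1 > 0" by linarith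
  have "a / (\<bar>c\<bar> + 1) > 0" using apos cp by (rule divide_pos_pos)
  hence tneg: "t < 0" unfolding t_def by linarith
  have "2 * a + t * c \<le> 0" using nn[of t] tneg by (simp add: zero_le_mult_iff)
  moreover have "t * c \<ge> - a"
  proof -
    have "\<bar>t * c\<bar> = a * \<bar>c\<bar> / (\<bar>c\<bar> + 1)" using apos cp unfolding t_def abs_mult by simp
    also have "\<dots> \<le> a" using apos cp by (simp add: divide_le_eq)
    finally show ?thesis by linarith
  qed
  ultimately show False using apos by linarith
qed


lemma psd_sqrt_unique:
  assumes P: "psd P" and Q: "psd Q" and eq: "P ** P = Q ** Q"
  shows "P = Q"
proof -
  define D where "D = P - Q"
  have sP: "transpose P = P" and sQ: "transpose Q = Q" using P Q by (auto simp: psd_def)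
  have sD: "transpose D = D" by (simp add: D_def transpose_diff sP sQ)
  have pd: "P ** D = P ** P - P ** Q" unfolding D_def by (rule mm_diff_l)
  have dq: "D ** Q = P ** Q - Q ** Q" unfolding D_def by (rule mm_diff_r)
  have "P ** D + D ** Q = P ** P - Q ** Q"
    unfolding pd dq by simp
  hence z: "P ** D + D ** Q = 0" by (simp add: eq)
  define s1 where "s1 = (\<Sum>i\<in>UNIV. column i D \<bullet> (P *v column i D))"
  define s2 where "s2 = (\<Sum>i\<in>UNIV. column i D \<bullet> (Q *v column i D))"
  have s1t: "s1 = trace (D ** (P ** D))"
    using trace_tmult[of D "P ** D"] by (simp add: sD s1_def col_mult)
  have s2t: "s2 = trace (D ** (D ** Q))"
  proof -
    have "s2 = trace (D ** (Q ** D))"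
      using trace_tmult[of D "Q ** D"] by (simp add: sD s2_def col_mult)
    also have "\<dots> = trace ((D ** Q) ** D)" by (simp add: matrix_mul_assoc)
    also have "\<dots> = trace (D ** (D ** Q))" by (rule trace_mul_sym)
    finally show ?thesis .
  qed
  have "s1 + s2 = trace (D ** (P ** D + D ** Q))"
    by (simp add: s1t s2t matrix_add_ldistrib trace_add)
  hence sum0: "s1 + s2 = 0" by (simp add: z trace_0[unfolded mat_0])
  have t1: "\<forall>i. column i D \<bullet> (P *v column i D) \<ge> 0" using P by (simp add: psd_def)
  have t2: "\<forall>i. column i D \<bullet> (Q *v column i D) \<ge> 0" using Q by (simp add: psd_def)
  have "s1 \<ge> 0" "s2 \<ge> 0" unfolding s1_def s2_def using t1 t2 by (auto intro: sum_nonneg)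
  hence "s1 = 0" "s2 = 0" using sum0 by linarith+
  hence e1: "\<forall>i. column i D \<bullet> (P *v column i D) = 0"
    and e2: "\<forall>i. column i D \<bullet> (Q *v column i D) = 0"
    unfolding s1_def s2_def using t1 t2 by (simp_all add: sum_nonneg_eq_0_iff)
  have "column i (D ** D) = 0" for i
  proof -
    have "P *v column i D = 0" using psd_null[OF P] e1 by blast
    moreover have "Q *v column i D = 0" using psd_null[OF Q] e2 by blast
    ultimately show ?thesis by (simp add: col_mult D_def matrix_vector_mult_diff_rdistrib)
  qed
  hence "D ** D = 0" by (intro mat_eq_cols) (simp add: column_def vec_eq_iff)
  hence "column i D \<bullet> column i D = 0" for i
    using tmult_entry[of D D i i] by (simp add: sD)
  hence "D = 0" by (intro mat_eq_cols) (simp add: column_def vec_eq_iff)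
  thus ?thesis by (simp add: D_def)
qed

lemma nuc_norm_eq: "psd P \<Longrightarrow> P ** P = transpose A ** A \<Longrightarrow> nuc_norm A = trace P"
  unfolding nuc_norm_def
  by (rule arg_cong[where f=trace], rule the1_equality) (auto intro: psd_sqrt_unique)



definition diag :: "('n::finite \<Rightarrow> real) \<Rightarrow> real^'n^'n" where
  "diag f = (\<chi> i j. if i = j then f i else 0)"

lemma mult_diag_entry: "(X ** diag g) $ i $ j = X $ i $ j * g j"
  by (simp add: matrix_matrix_mult_def diag_def if_distrib cong: if_cong)

lemma diag_mult: "diag f ** diag g = diag (\<lambda>i. f i * g i)"
  by (simp add: vec_eq_iff mult_diag_entry) (simp add: diag_def)

lemma transpose_diag: "transpose (diag f) = diag f"
  by (simp add: vec_eq_iff transpose_def diag_def)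

lemma trace_diag: "trace (diag f) = sum f UNIV"
  by (simp add: trace_def diag_def)

lemma diag_mv: "(diag f *v y) $ i = f i * y $ i"
proof -
  have "(diag f *v y) $ i = (\<Sum>j\<in>UNIV. (if i = j then f i else 0) * y$j)"
    by (simp add: matrix_vector_mult_def diag_def)
  also have "\<dots> = (\<Sum>j\<in>UNIV. if i = j then f i * y$j else 0)"
    by (rule sum.cong) simp_all
  also have "\<dots> = f i * y $ i" by simp
  finally show ?thesis .
qed

lemma inner_diag: "y \<bullet> (diag f *v y) = (\<Sum>i\<in>UNIV. f i * (y $ i)^2)"
  by (simp add: inner_vec_def diag_mv power2_eq_square mult_ac)

lemma nuc_ge:
  fixes A M :: "real^'n^'n"
  assumes contr: "\<forall>x. norm (M *v x) \<le> norm x"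
  shows "M \<bullet> A \<le> nuc_norm A"
proof -
  define S where "S = transpose A ** A"
  have symS: "transpose S = S" by (simp add: S_def matrix_transpose_mul)
  obtain Q :: "real^'n^'n" and \<mu> where QQ: "transpose Q ** Q = mat 1" and QQ': "Q ** transpose Q = mat 1"
    and eig: "\<forall>j. S *v column j Q = \<mu> j *\<^sub>R column j Q"
    using spectral[OF symS] by blast
  have qq: "column j Q \<bullet> column j Q = 1" for j
    using arg_cong[OF QQ, of "\<lambda>X. X $ j $ j"] by (simp add: tmult_entry mat_def)
  have Aq: "(A *v column j Q) \<bullet> (A *v column j Q) = \<mu> j" for j
  proof -
    have "(A *v column j Q) \<bullet> (A *v column j Q) = column j Q \<bullet> (S *v column j Q)"
      by (simp add: S_def matrix_vector_mul_assoc[symmetric] tmv_inner[symmetric] inner_commute)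
    also have "\<dots> = \<mu> j" by (simp add: eig qq)
    finally show ?thesis .
  qed
  have mu_nn: "\<mu> j \<ge> 0" for j using Aq[of j] by (metis inner_ge_zero)
  define Dg where "Dg = diag (\<lambda>i. sqrt (\<mu> i))"
  define P where "P = Q ** Dg ** transpose Q"
  have SQ: "S ** Q = Q ** diag \<mu>"
  proof (rule mat_eq_cols)
    fix j
    show "column j (S ** Q) = column j (Q ** diag \<mu>)"
    proof -
      have "column j (S ** Q) = \<mu> j *\<^sub>R column j Q" by (simp only: col_mult eig[rule_format])
      moreover have "column j (Q ** diag \<mu>) = \<mu> j *\<^sub>R column j Q"
        by (simp add: vec_eq_iff column_def mult_diag_entry mult.commute)
      ultimately show ?thesis by simp
    qed
  qed
  have Seq: "S = Q ** diag \<mu> ** transpose Q"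
  proof -
    have "S = S ** (Q ** transpose Q)" by (simp add: QQ')
    also have "\<dots> = Q ** diag \<mu> ** transpose Q" by (simp add: matrix_mul_assoc SQ)
    finally show ?thesis .
  qed
  have DD: "Dg ** Dg = diag \<mu>"
    using mu_nn by (simp add: Dg_def diag_mult)
  have psdP: "psd P"
    unfolding psd_def
  proof
    show "transpose P = P"
      by (simp add: P_def matrix_transpose_mul transpose_diag Dg_def matrix_mul_assoc)
    show "\<forall>x. 0 \<le> x \<bullet> (P *v x)"
    proof
      fix x
      have "x \<bullet> (P *v x) = (transpose Q *v x) \<bullet> (Dg *v (transpose Q *v x))"
        by (simp add: P_def matrix_vector_mul_assoc[symmetric] dot_lmul_matrix)
      also have "\<dots> \<ge> 0" unfolding Dg_def inner_diag by (intro sum_nonneg mult_nonneg_nonneg) (simp_all add: mu_nn)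
      finally show "0 \<le> x \<bullet> (P *v x)" .
    qed
  qed
  have PP: "P ** P = S"
  proof -
    have "P ** P = Q ** Dg ** (transpose Q ** Q) ** Dg ** transpose Q"
      by (simp add: P_def matrix_mul_assoc)
    also have "\<dots> = Q ** (Dg ** Dg) ** transpose Q" by (simp add: QQ matrix_mul_assoc)
    finally show ?thesis by (simp add: DD Seq)
  qed
  have nuc: "nuc_norm A = (\<Sum>i\<in>UNIV. sqrt (\<mu> i))"
  proof -
    have "nuc_norm A = trace P" using nuc_norm_eq[OF psdP] PP by (simp add: S_def)
    also have "\<dots> = trace (Q ** (Dg ** transpose Q))" by (simp add: P_def matrix_mul_assoc)
    also have "\<dots> = trace ((Dg ** transpose Q) ** Q)" by (rule trace_mul_sym)
    also have "\<dots> = trace Dg" by (simp add: matrix_mul_assoc[symmetric] QQ)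
    finally show ?thesis by (simp add: Dg_def trace_diag)
  qed
  have "M \<bullet> A = trace (transpose M ** A)" by (rule inner_trace)
  also have "\<dots> = trace ((transpose M ** A ** Q) ** transpose Q)"
    by (simp add: matrix_mul_assoc[symmetric] QQ')
  also have "\<dots> = trace (transpose Q ** (transpose M ** A ** Q))" by (rule trace_mul_sym)
  also have "\<dots> = trace (transpose (M ** Q) ** (A ** Q))"
    by (simp add: matrix_transpose_mul matrix_mul_assoc)
  also have "\<dots> = (\<Sum>i\<in>UNIV. (M *v column i Q) \<bullet> (A *v column i Q))"
    by (simp add: trace_tmult col_mult)
  also have "\<dots> \<le> (\<Sum>i\<in>UNIV. sqrt (\<mu> i))"
  proof (rule sum_mono)
    fix i
    have "(M *v column i Q) \<bullet> (A *v column i Q) \<le> norm (M *v column i Q) * norm (A *v column i Q)"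
      by (rule norm_cauchy_schwarz)
    also have "\<dots> \<le> 1 * norm (A *v column i Q)"
    proof (rule mult_right_mono)
      have "norm (column i Q) = 1" using qq[of i] by (simp add: norm_eq_1)
      thus "norm (M *v column i Q) \<le> 1" using contr by metis
    qed simp
    also have "\<dots> = sqrt (\<mu> i)" by (simp add: norm_eq_sqrt_inner Aq)
    finally show "(M *v column i Q) \<bullet> (A *v column i Q) \<le> sqrt (\<mu> i)" .
  qed
  finally show ?thesis by (simp add: nuc)
qed



section \<open>Orthogonal projection\<close>

lemma tangent_subspace: "subspace (tangent_space U V)"
  unfolding subspace_def tangent_space_def
proof (intro conjI ballI allI)
  show "0 \<in> {U ** transpose X + Y ** transpose V |X Y. True}"
    by (rule CollectI, rule exI[of _ 0], rule exI[of _ 0]) (simp add: transpose_def vec_eq_iff matrix_matrix_mult_def)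
next
  fix x y assume "x \<in> {U ** transpose X + Y ** transpose V |X Y. True}"
    "y \<in> {U ** transpose X + Y ** transpose V |X Y. True}"
  then obtain X1 Y1 X2 Y2 where "x = U ** transpose X1 + Y1 ** transpose V"
    "y = U ** transpose X2 + Y2 ** transpose V" by blast
  thus "x + y \<in> {U ** transpose X + Y ** transpose V |X Y. True}"
    by (intro CollectI exI[of _ "X1 + X2"] exI[of _ "Y1 + Y2"])
      (simp add: transpose_add matrix_add_ldistrib mm_add_r algebra_simps)
next
  fix c :: real and x assume "x \<in> {U ** transpose X + Y ** transpose V |X Y. True}"
  then obtain X1 Y1 where "x = U ** transpose X1 + Y1 ** transpose V" by blast
  thus "c *\<^sub>R x \<in> {U ** transpose X + Y ** transpose V |X Y. True}"
    by (intro CollectI exI[of _ "c *\<^sub>R X1"] exI[of _ "c *\<^sub>R Y1"])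
      (simp add: transpose_scalar matrix_scalar_ac scalar_matrix_assoc[symmetric] scaleR_add_right)
qed

lemma orth_proj_ex1:
  fixes T :: "('n::finite sqmat) set"
  assumes "subspace T"
  shows "\<exists>!P. P \<in> T \<and> (\<forall>Z\<in>T. inner (M - P) Z = 0)"
proof -
  obtain y z where y: "y \<in> span T" and z: "\<And>w. w \<in> span T \<Longrightarrow> orthogonal z w" and yz: "M = y + z"
    using orthogonal_subspace_decomp_exists[of T M] by metis
  have spanT: "span T = T" using assms by simp
  have ex: "y \<in> T \<and> (\<forall>Z\<in>T. inner (M - y) Z = 0)"
    using y z spanT yz by (auto simp: orthogonal_def)
  have uq: "P1 = P2" if "P1 \<in> T \<and> (\<forall>Z\<in>T. inner (M - P1) Z = 0)"
      "P2 \<in> T \<and> (\<forall>Z\<in>T. inner (M - P2) Z = 0)" for P1 P2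
  proof -
    have d: "P1 - P2 \<in> T" using that assms by (simp add: subspace_diff)
    have "inner (M - P1) (P1 - P2) = 0" "inner (M - P2) (P1 - P2) = 0" using that d by auto
    hence "inner (P1 - P2) (P1 - P2) = 0" by (simp add: inner_diff_left)
    thus ?thesis by simp
  qed
  show ?thesis using ex uq by blast
qed

lemma orth_proj_props:
  assumes "subspace T"
  shows "orth_proj T M \<in> T" "\<forall>Z\<in>T. inner (M - orth_proj T M) Z = 0"
  using theI'[OF orth_proj_ex1[OF assms, of M]] unfolding orth_proj_def by blast+

lemma orth_proj_unique:
  assumes "subspace T" "P \<in> T" "\<forall>Z\<in>T. inner (M - P) Z = 0"
  shows "orth_proj T M = P"
  unfolding orth_proj_def
  by (rule the1_equality[OF orth_proj_ex1[OF assms(1)]]) (use assms(2,3) in blast)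

lemma PT_in: "P_T U V M \<in> tangent_space U V"
  unfolding P_T_def by (rule orth_proj_props(1)[OF tangent_subspace])

lemma PT_orth: "Z \<in> tangent_space U V \<Longrightarrow> inner (M - P_T U V M) Z = 0"
  unfolding P_T_def using orth_proj_props(2)[OF tangent_subspace] by blast

lemma PT_zero_iff: "P_T U V M = 0 \<longleftrightarrow> (\<forall>Z\<in>tangent_space U V. inner M Z = 0)"
proof
  assume "P_T U V M = 0" thus "\<forall>Z\<in>tangent_space U V. inner M Z = 0" using PT_orth[of _ U V M] by simp
next
  assume "\<forall>Z\<in>tangent_space U V. inner M Z = 0"
  thus "P_T U V M = 0" unfolding P_T_def
    by (intro orth_proj_unique tangent_subspace subspace_0) simp_all
qed

lemma PT_id: "M \<in> tangent_space U V \<Longrightarrow> P_T U V M = M"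
  unfolding P_T_def by (intro orth_proj_unique tangent_subspace) simp_all

lemma PT_linear: "linear (P_T U V)"
proof (rule linearI)
  fix M N
  show "P_T U V (M + N) = P_T U V M + P_T U V N" unfolding P_T_def
  proof (rule orth_proj_unique[OF tangent_subspace])
    show "orth_proj (tangent_space U V) M + orth_proj (tangent_space U V) N \<in> tangent_space U V"
      by (rule subspace_add[OF tangent_subspace]) (rule PT_in[unfolded P_T_def])+
    show "\<forall>Z\<in>tangent_space U V. inner (M + N - (orth_proj (tangent_space U V) M + orth_proj (tangent_space U V) N)) Z = 0"
    proof
      fix Z assume Z: "Z \<in> tangent_space U V"
      have "inner (M - orth_proj (tangent_space U V) M) Z = 0" "inner (N - orth_proj (tangent_space U V) N) Z = 0"
        using PT_orth[unfolded P_T_def, OF Z] by blast+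
      thus "inner (M + N - (orth_proj (tangent_space U V) M + orth_proj (tangent_space U V) N)) Z = 0"
        by (simp add: inner_diff_left inner_add_left)
    qed
  qed
next
  fix c :: real and M
  show "P_T U V (c *\<^sub>R M) = c *\<^sub>R P_T U V M" unfolding P_T_def
  proof (rule orth_proj_unique[OF tangent_subspace])
    show "c *\<^sub>R orth_proj (tangent_space U V) M \<in> tangent_space U V"
      by (rule subspace_scale[OF tangent_subspace]) (rule PT_in[unfolded P_T_def])
    show "\<forall>Z\<in>tangent_space U V. inner (c *\<^sub>R M - c *\<^sub>R orth_proj (tangent_space U V) M) Z = 0"
      using PT_orth[unfolded P_T_def] by (metis inner_scaleR_left mult_zero_right scaleR_diff_right)
  qed
qed

lemma Pidx_linear: "linear (P_idx A)"
  by (rule linearI) (simp_all add: P_idx_def vec_eq_iff)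



section \<open>SVD facts\<close>

definition IK :: "'n::finite set \<Rightarrow> real^'n^'n" where
  "IK K = diag (\<lambda>k. if k \<in> K then 1 else 0)"

lemma col_entry: "column j X $ i = X $ i $ j"
  by (simp add: column_def)

lemma svd_orth:
  assumes orth: "\<forall>k\<in>K. \<forall>l\<in>K. column k U \<bullet> column l U = (if k = l then 1 else 0)"
    and z: "\<forall>k. k \<notin> K \<longrightarrow> column k U = 0"
  shows "transpose U ** U = IK K" "U ** IK K = U"
proof -
  show "transpose U ** U = IK K"
  proof (subst vec_eq_iff, intro allI, subst vec_eq_iff, intro allI)
    fix k l
    show "(transpose U ** U) $ k $ l = IK K $ k $ l"
      unfolding tmult_entry IK_def diag_def using orth z by (cases "k \<in> K"; cases "l \<in> K") auto
  qed
  show "U ** IK K = U"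
  proof (subst vec_eq_iff, intro allI, subst vec_eq_iff, intro allI)
    fix i j
    show "(U ** IK K) $ i $ j = U $ i $ j"
      unfolding IK_def mult_diag_entry using z col_entry[of j U i] by (cases "j \<in> K") auto
  qed
qed

lemma svd_facts:
  assumes svd: "reduced_svd L0 K U Sig V"
  shows "transpose U ** U = IK K" "U ** IK K = U" "transpose V ** V = IK K" "V ** IK K = V"
    "Sig = diag (\<lambda>k. Sig $ k $ k)" "\<forall>k. Sig $ k $ k \<ge> 0"
    "Sig ** IK K = Sig" "IK K ** Sig = Sig" "L0 = U ** Sig ** transpose V"
proof -
  show "transpose U ** U = IK K" "U ** IK K = U"
    using svd_orth[of K U] svd unfolding reduced_svd_def by blast+
  show "transpose V ** V = IK K" "V ** IK K = V"
    using svd_orth[of K V] svd unfolding reduced_svd_def by blast+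
  have sig: "\<forall>i j. Sig $ i $ j = (if i = j \<and> i \<in> K then Sig $ i $ i else 0)"
    and pos: "\<forall>k\<in>K. Sig $ k $ k > 0" using svd unfolding reduced_svd_def by blast+
  show sd: "Sig = diag (\<lambda>k. Sig $ k $ k)"
    unfolding diag_def vec_eq_iff using sig by auto
  have z: "k \<notin> K \<Longrightarrow> Sig $ k $ k = 0" for k using sig by metis
  show "\<forall>k. Sig $ k $ k \<ge> 0" using pos z by (metis less_eq_real_def order_refl)
  have "diag (\<lambda>k. Sig $ k $ k) ** IK K = diag (\<lambda>k. Sig $ k $ k)"
    "IK K ** diag (\<lambda>k. Sig $ k $ k) = diag (\<lambda>k. Sig $ k $ k)"
    by (simp_all add: IK_def diag_mult, (rule arg_cong[where f=diag], rule ext, simp add: z)+)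
  thus "Sig ** IK K = Sig" "IK K ** Sig = Sig" using sd by simp_all
  show "L0 = U ** Sig ** transpose V" using svd unfolding reduced_svd_def by blast
qed


lemma L0_in_T:
  assumes svd: "reduced_svd L0 K U Sig V"
  shows "L0 \<in> tangent_space U V"
proof -
  have "L0 = U ** transpose (V ** transpose Sig) + 0 ** transpose V"
    using svd_facts(9)[OF svd] by (simp add: matrix_transpose_mul matrix_mul_assoc)
  thus ?thesis unfolding tangent_space_def by blast
qed

lemma nuc_L0:
  assumes svd: "reduced_svd L0 K U Sig V"
  shows "nuc_norm L0 = (U ** transpose V) \<bullet> L0"
proof -
  note f = svd_facts[OF svd]
  define P where "P = V ** Sig ** transpose V"
  have tS: "transpose Sig = Sig" by (subst f(5), simp add: transpose_diag, subst f(5), simp)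
  have psdP: "psd P"
    unfolding psd_def
  proof
    show "transpose P = P"
      by (simp add: P_def matrix_transpose_mul tS matrix_mul_assoc)
    show "\<forall>x. 0 \<le> x \<bullet> (P *v x)"
    proof
      fix x
      have "x \<bullet> (P *v x) = (transpose V *v x) \<bullet> (Sig *v (transpose V *v x))"
        by (simp add: P_def matrix_vector_mul_assoc[symmetric] dot_lmul_matrix)
      also have "\<dots> \<ge> 0" apply (subst f(5)) unfolding inner_diag
        by (intro sum_nonneg mult_nonneg_nonneg) (simp_all add: f(6))
      finally show "0 \<le> x \<bullet> (P *v x)" .
    qed
  qed
  have "P ** P = V ** Sig ** (transpose V ** V) ** Sig ** transpose V"
    by (simp add: P_def matrix_mul_assoc)
  also have "\<dots> = V ** Sig ** Sig ** transpose V"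
    by (simp add: f(3) matrix_mul_assoc[symmetric] f(8))
  also have "\<dots> = V ** transpose Sig ** (transpose U ** U) ** Sig ** transpose V"
    by (simp add: f(1) tS matrix_mul_assoc[symmetric] f(8))
  also have "\<dots> = transpose L0 ** L0"
    by (subst (1 2) f(9)) (simp add: matrix_transpose_mul matrix_mul_assoc)
  finally have PP: "P ** P = transpose L0 ** L0" .
  have "nuc_norm L0 = trace P" by (rule nuc_norm_eq[OF psdP PP])
  also have "\<dots> = trace (V ** (Sig ** transpose V))" by (simp add: P_def matrix_mul_assoc)
  also have "\<dots> = trace ((Sig ** transpose V) ** V)" by (rule trace_mul_sym)
  also have "\<dots> = trace Sig" by (simp add: matrix_mul_assoc[symmetric] f(3) f(7))
  finally have n: "nuc_norm L0 = trace Sig" .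
  have "(U ** transpose V) \<bullet> L0 = trace (transpose (U ** transpose V) ** L0)" by (rule inner_trace)
  also have "\<dots> = trace (V ** (transpose U ** U) ** Sig ** transpose V)"
    by (subst f(9)) (simp add: matrix_transpose_mul matrix_mul_assoc)
  also have "\<dots> = trace (V ** (Sig ** transpose V))"
    by (simp add: f(1) f(4) matrix_mul_assoc)
  also have "\<dots> = trace ((Sig ** transpose V) ** V)" by (rule trace_mul_sym)
  also have "\<dots> = trace Sig" by (simp add: matrix_mul_assoc[symmetric] f(3) f(7))
  finally show ?thesis using n by simp
qed


declare transpose_matrix_vector[simp del]

lemma inner_self_zero_mat: "(B::real^'n^'n) \<bullet> B = 0 \<Longrightarrow> B = 0" by simp

lemma contr_sum:
  assumes svd: "reduced_svd L0 K U Sig V"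
    and orth: "\<forall>Z\<in>tangent_space U V. W' \<bullet> Z = 0"
    and cw: "\<forall>x. norm (W' *v x) \<le> norm x"
  shows "\<forall>x. norm ((U ** transpose V + W') *v x) \<le> norm x"
proof
  fix x
  note f = svd_facts[OF svd]
  define B where "B = transpose U ** W'"
  have "U ** B \<in> tangent_space U V"
    unfolding tangent_space_def by (rule CollectI, rule exI[of _ "transpose B"], rule exI[of _ 0]) simp
  hence "W' \<bullet> (U ** B) = 0" using orth by blast
  moreover have "B \<bullet> B = W' \<bullet> (U ** B)"
    unfolding inner_trace by (simp add: B_def matrix_transpose_mul matrix_mul_assoc)
  ultimately have B0: "transpose U ** W' = 0" unfolding B_def[symmetric] by simp
  define C where "C = W' ** V"
  have "C ** transpose V \<in> tangent_space U V"
    unfolding tangent_space_def by (rule CollectI, rule exI[of _ 0], rule exI[of _ C])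
      (simp add: transpose_def vec_eq_iff matrix_matrix_mult_def)
  hence "W' \<bullet> (C ** transpose V) = 0" using orth by blast
  moreover have "C \<bullet> C = W' \<bullet> (C ** transpose V)"
  proof -
    have "C \<bullet> C = trace (transpose V ** (transpose W' ** W' ** V))"
      unfolding inner_trace by (simp add: C_def matrix_transpose_mul matrix_mul_assoc)
    also have "\<dots> = trace ((transpose W' ** W' ** V) ** transpose V)" by (rule trace_mul_sym)
    also have "\<dots> = W' \<bullet> (C ** transpose V)"
      unfolding inner_trace by (simp add: C_def matrix_mul_assoc)
    finally show ?thesis .
  qed
  ultimately have C0: "W' ** V = 0" unfolding C_def[symmetric] by simp
  have IKV: "IK K ** transpose V = transpose V"
    using arg_cong[OF f(4), of transpose] by (simp add: matrix_transpose_mul IK_def transpose_diag)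
  define y where "y = transpose V *v x"
  define x1 where "x1 = V *v y"
  define x2 where "x2 = x - x1"
  have Vty: "transpose V *v x1 = y"
  proof -
    have "transpose V *v x1 = (transpose V ** V ** transpose V) *v x"
      by (simp add: x1_def y_def matrix_vector_mul_assoc matrix_mul_assoc)
    also have "\<dots> = y" by (simp add: f(3) IKV y_def)
    finally show ?thesis .
  qed
  have Vtx2: "transpose V *v x2 = 0" by (simp add: x2_def Vty y_def matrix_vector_mult_diff_distrib)
  have Wx1: "W' *v x1 = 0" by (simp add: x1_def matrix_vector_mul_assoc C0)
  have IKy: "IK K *v y = y" by (simp add: y_def matrix_vector_mul_assoc IKV)
  define a where "a = (U ** transpose V) *v x"
  define b where "b = W' *v x"
  have a_eq: "a = U *v y" by (simp add: a_def y_def matrix_vector_mul_assoc)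
  have b_eq: "b = W' *v x2" by (simp add: b_def x2_def matrix_vector_mult_diff_distrib Wx1)
  have ab: "a \<bullet> b = 0"
  proof -
    have "a \<bullet> b = y \<bullet> (transpose U *v (W' *v x))" by (simp add: a_eq b_def mv_inner)
    also have "\<dots> = 0" by (simp add: matrix_vector_mul_assoc B0)
    finally show ?thesis .
  qed
  have aa: "a \<bullet> a = y \<bullet> y"
  proof -
    have "a \<bullet> a = y \<bullet> (transpose U *v (U *v y))" by (simp add: a_eq mv_inner)
    also have "\<dots> = y \<bullet> y" by (simp add: matrix_vector_mul_assoc f(1) IKy)
    finally show ?thesis .
  qed
  have x1x1: "x1 \<bullet> x1 = y \<bullet> y"
  proof -
    have "x1 \<bullet> x1 = y \<bullet> (transpose V *v (V *v y))" by (simp add: x1_def mv_inner)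
    also have "\<dots> = y \<bullet> y" by (simp add: matrix_vector_mul_assoc f(3) IKy)
    finally show ?thesis .
  qed
  have x1x2: "x1 \<bullet> x2 = 0" by (simp add: x1_def mv_inner Vtx2)
  have xx: "x \<bullet> x = x1 \<bullet> x1 + x2 \<bullet> x2"
  proof -
    have "x = x1 + x2" by (simp add: x2_def)
    hence "x \<bullet> x = (x1 + x2) \<bullet> (x1 + x2)" by simp
    also have "\<dots> = x1 \<bullet> x1 + x2 \<bullet> x2" using x1x2
      by (simp add: inner_add_left inner_add_right inner_commute)
    finally show ?thesis .
  qed
  have bb: "b \<bullet> b \<le> x2 \<bullet> x2" using cw b_eq by (metis norm_le)
  have "(a + b) \<bullet> (a + b) = a \<bullet> a + b \<bullet> b" using ab
    by (simp add: inner_add_left inner_add_right inner_commute)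
  also have "\<dots> \<le> x \<bullet> x" using aa bb xx x1x1 by linarith
  finally have "(a + b) \<bullet> (a + b) \<le> x \<bullet> x" .
  moreover have "(U ** transpose V + W') *v x = a + b"
    by (simp add: a_def b_def matrix_vector_mult_add_rdistrib)
  ultimately show "norm ((U ** transpose V + W') *v x) \<le> norm x" by (simp add: norm_le)
qed



lemma feasible_entry:
  assumes "feasible Obs L0 S0 L S" "(i, j) \<in> Obs"
  shows "L $ i $ j + S $ i $ j = L0 $ i $ j + S0 $ i $ j"
proof -
  have "P_idx Obs (L + S) $ i $ j = (P_idx Obs L0 + S0) $ i $ j"
    using assms(1) unfolding feasible_def by simp
  thus ?thesis using assms(2) by (simp add: P_idx_def)
qed

lemma max_norm_ge: "\<bar>F $ i $ j\<bar> \<le> max_norm F"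
  unfolding max_norm_def
proof (rule Max_ge)
  have "{\<bar>F $ i $ j\<bar> |i j. True} = (\<lambda>(i, j). \<bar>F $ i $ j\<bar>) ` UNIV" by auto
  thus "finite {\<bar>F $ i $ j\<bar> |i j. True}" by simp
qed auto

lemma entry_ineq:
  fixes s0 S H z f :: real
  assumes "(inOm \<longrightarrow> z = sgn s0 \<and> H = s0 - S)"
    and "(\<not> inOm \<longrightarrow> s0 = 0 \<and> z * H \<ge> - f * \<bar>S\<bar>)"
  shows "z * H + \<bar>S\<bar> \<ge> \<bar>s0\<bar> + (1 - f) * (if inOm then 0 else \<bar>S - s0\<bar>)"
proof (cases inOm)
  case True
  hence "z = sgn s0" "H = s0 - S" using assms by auto
  moreover have "sgn s0 * s0 = \<bar>s0\<bar>" by (simp add: sgn_mult_self_eq abs_sgn mult.commute)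
  moreover have "sgn s0 * S \<le> \<bar>S\<bar>"
    by (cases "s0 > 0"; cases "s0 = 0") (auto simp: sgn_if)
  ultimately show ?thesis using True by (simp add: right_diff_distrib)
next
  case False
  thus ?thesis using assms by (simp add: algebra_simps)
qed


theorem lemma7p1:
  fixes L0 U Sig V S0' :: "real^'n::finite^'n" and K :: "'n set"
    and lam :: real and Obs Om Gam :: "('n \<times> 'n) set"
  assumes svd: "reduced_svd L0 K U Sig V"
    and lam_pos: "lam > 0"
    and Om_sub: "Om \<subseteq> Obs"
    and Gam_def: "Gam = Obs - Om"
    and supp: "\<forall>i j. (i, j) \<notin> Om \<longrightarrow> S0' $ i $ j = 0"
    and opnorm: "onorm (\<lambda>M. P_idx (- Gam) (P_T U V M)) < 1"
    and cert: "\<exists>W F. U ** transpose V + W = lam *\<^sub>R (sgn_mat S0' + F) \<and>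
                     P_T U V W = 0 \<and> spec_norm W < 1 \<and>
                     P_idx (- Gam) F = 0 \<and> max_norm F < 1"
  shows "unique_solution lam Obs L0 S0' L0 S0'"
proof -
  obtain W F where Wc: "U ** transpose V + W = lam *\<^sub>R (sgn_mat S0' + F)"
    and PTW: "P_T U V W = 0" and sW: "spec_norm W < 1"
    and PF: "P_idx (- Gam) F = 0" and mF: "max_norm F < 1"
    using cert by blast
  define f where "f = max_norm F"
  define s where "s = spec_norm W"
  define Z where "Z = sgn_mat S0' + F"
  have Fz: "(i, j) \<notin> Gam \<Longrightarrow> F $ i $ j = 0" for i j
  proof -
    assume "(i, j) \<notin> Gam"
    moreover have "P_idx (- Gam) F $ i $ j = 0" using PF by simp
    ultimately show ?thesis by (simp add: P_idx_def)
  qed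
  have Fle: "\<bar>F $ i $ j\<bar> \<le> f" for i j unfolding f_def by (rule max_norm_ge)
  have f0: "0 \<le> f" using Fle[of undefined undefined] by linarith
  have f1: "f < 1" using mF by (simp add: f_def)
  have WT: "\<forall>Z\<in>tangent_space U V. W \<bullet> Z = 0" using PTW PT_zero_iff by blast
  have blW: "bounded_linear (\<lambda>x. W *v x)"
    using matrix_vector_mul_linear linear_conv_bounded_linear by blast
  have cW: "norm (W *v x) \<le> s * norm x" for x
    unfolding s_def spec_norm_def by (rule onorm[OF blW])
  have s0: "0 \<le> s" unfolding s_def spec_norm_def by (rule onorm_pos_le[OF blW])
  have s1: "s < 1" using sW by (simp add: s_def)
  have L0T: "L0 \<in> tangent_space U V" by (rule L0_in_T[OF svd])
  have nucL0: "nuc_norm L0 = (U ** transpose V) \<bullet> L0" by (rule nuc_L0[OF svd])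
  have feas0: "feasible Obs L0 S0' L0 S0'"
    unfolding feasible_def
  proof -
    have "P_idx Obs (L0 + S0') = P_idx Obs L0 + P_idx Obs S0'"
      by (simp add: P_idx_def vec_eq_iff)
    moreover have "P_idx Obs S0' = S0'"
      using supp Om_sub by (auto simp: P_idx_def vec_eq_iff)
    ultimately show "P_idx Obs (L0 + S0') = P_idx Obs L0 + S0'" by simp
  qed
  have key: "\<exists>\<epsilon>>0. \<exists>R\<ge>0.
      objective lam L0 S0' + \<epsilon> * ((L - L0 - P_T U V (L - L0)) \<bullet> (L - L0 - P_T U V (L - L0)))
        + lam * (1 - f) * R \<le> objective lam L S \<and>
      (R = 0 \<longrightarrow> (\<forall>i j. (i, j) \<notin> Om \<longrightarrow> S $ i $ j = S0' $ i $ j))"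
    if feas: "feasible Obs L0 S0' L S" for L S
  proof -
    define H where "H = L - L0"
    define G where "G = H - P_T U V H"
    have GT: "\<forall>Z\<in>tangent_space U V. G \<bullet> Z = 0" unfolding G_def using PT_orth by blast
    have blG: "bounded_linear (\<lambda>x. G *v x)"
      using matrix_vector_mul_linear linear_conv_bounded_linear by blast
    define c where "c = onorm (\<lambda>x. G *v x)"
    have cG: "norm (G *v x) \<le> c * norm x" for x unfolding c_def by (rule onorm[OF blG])
    have c0: "0 \<le> c" unfolding c_def by (rule onorm_pos_le[OF blG])
    define \<epsilon> where "\<epsilon> = (1 - s) / (c + 1)"
    have epos: "\<epsilon> > 0" using s1 c0 by (simp add: \<epsilon>_def)
    have ec: "\<epsilon> * c \<le> 1 - s"
    proof -
      have "\<epsilon> * c = (1 - s) * (c / (c + 1))" by (simp add: \<epsilon>_def)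
      also have "\<dots> \<le> (1 - s) * 1" using s1 c0 by (intro mult_left_mono) auto
      finally show ?thesis by simp
    qed
    define W' where "W' = W + \<epsilon> *\<^sub>R G"
    have W'T: "\<forall>Z\<in>tangent_space U V. W' \<bullet> Z = 0"
      using WT GT by (simp add: W'_def inner_add_left)
    have cW': "\<forall>x. norm (W' *v x) \<le> norm x"
    proof
      fix x
      have "norm (W' *v x) = norm (W *v x + \<epsilon> *\<^sub>R (G *v x))"
        by (simp add: W'_def matrix_vector_mult_add_rdistrib scaleR_matrix_vector_assoc)
      also have "\<dots> \<le> norm (W *v x) + \<epsilon> * norm (G *v x)"
      proof -
        have "norm (\<epsilon> *\<^sub>R (G *v x)) = \<epsilon> * norm (G *v x)" using epos by simp
        thus ?thesis using norm_triangle_ineq[of "W *v x" "\<epsilon> *\<^sub>R (G *v x)"] by linarith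
      qed
      also have "\<dots> \<le> s * norm x + \<epsilon> * (c * norm x)"
        using cW cG epos by (intro add_mono mult_left_mono) auto
      also have "\<dots> = (s + \<epsilon> * c) * norm x" by (simp add: algebra_simps)
      also have "\<dots> \<le> 1 * norm x" using ec by (intro mult_right_mono) auto
      finally show "norm (W' *v x) \<le> norm x" by simp
    qed
    have cM: "\<forall>x. norm ((U ** transpose V + W') *v x) \<le> norm x"
      by (rule contr_sum[OF svd W'T cW'])
    have nucL: "(U ** transpose V + W') \<bullet> L \<le> nuc_norm L"
      by (rule nuc_ge[OF cM])
    have LH: "L = L0 + H" by (simp add: H_def)
    have GH: "G \<bullet> H = G \<bullet> G"
    proof -
      have "H = G + P_T U V H" by (simp add: G_def)
      hence "G \<bullet> H = G \<bullet> G + G \<bullet> P_T U V H" by (metis inner_add_right)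
      moreover have "G \<bullet> P_T U V H = 0" using GT PT_in by blast
      ultimately show ?thesis by simp
    qed
    have W'L0: "W' \<bullet> L0 = 0" using W'T L0T by blast
    have expand: "(U ** transpose V + W') \<bullet> L
        = nuc_norm L0 + (lam *\<^sub>R Z) \<bullet> H + \<epsilon> * (G \<bullet> G)"
    proof -
      have "(U ** transpose V + W') \<bullet> L = (U ** transpose V) \<bullet> L0 + W' \<bullet> L0
          + (U ** transpose V + W) \<bullet> H + \<epsilon> * (G \<bullet> H)"
        by (simp add: LH W'_def inner_add_left inner_add_right algebra_simps)
      thus ?thesis using W'L0 GH nucL0 Wc by (simp add: Z_def)
    qed
    define D where "D = S - S0'"
    define R where "R = (\<Sum>i\<in>UNIV. \<Sum>j\<in>UNIV. if (i, j) \<in> Om then 0 else \<bar>D $ i $ j\<bar>)"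
    have R0: "R \<ge> 0" unfolding R_def by (intro sum_nonneg) auto
    have ent: "Z $ i $ j * H $ i $ j + \<bar>S $ i $ j\<bar> \<ge> \<bar>S0' $ i $ j\<bar>
        + (1 - f) * (if (i, j) \<in> Om then 0 else \<bar>D $ i $ j\<bar>)" for i j
    proof (cases "(i, j) \<in> Obs")
      case True
      have fe: "L $ i $ j + S $ i $ j = L0 $ i $ j + S0' $ i $ j" by (rule feasible_entry[OF feas True])
      have Hij: "H $ i $ j = S0' $ i $ j - S $ i $ j" using fe by (simp add: H_def)
      have p1: "(i, j) \<in> Om \<longrightarrow> Z $ i $ j = sgn (S0' $ i $ j) \<and> H $ i $ j = S0' $ i $ j - S $ i $ j"
        using Fz[of i j] Gam_def Hij by (auto simp: Z_def sgn_mat_def)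
      have p2: "(i, j) \<notin> Om \<longrightarrow> S0' $ i $ j = 0 \<and> - f * \<bar>S $ i $ j\<bar> \<le> Z $ i $ j * H $ i $ j"
      proof
        assume nO: "(i, j) \<notin> Om"
        hence s00: "S0' $ i $ j = 0" using supp by blast
        have "Z $ i $ j * H $ i $ j = - (F $ i $ j * S $ i $ j)"
          using s00 Hij by (simp add: Z_def sgn_mat_def)
        moreover have "\<bar>F $ i $ j * S $ i $ j\<bar> \<le> f * \<bar>S $ i $ j\<bar>"
          unfolding abs_mult using Fle by (intro mult_right_mono) auto
        ultimately show "S0' $ i $ j = 0 \<and> - f * \<bar>S $ i $ j\<bar> \<le> Z $ i $ j * H $ i $ j"
          using s00 by linarith
      qed
      have "D $ i $ j = S $ i $ j - S0' $ i $ j" by (simp add: D_def)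
      thus ?thesis using entry_ineq[OF p1 p2] by (cases "(i, j) \<in> Om") simp_all
    next
      case False
      hence nO: "(i, j) \<notin> Om" and nG: "(i, j) \<notin> Gam" using Om_sub Gam_def by auto
      hence "S0' $ i $ j = 0" "F $ i $ j = 0" using supp Fz by auto
      hence "Z $ i $ j = 0" by (simp add: Z_def sgn_mat_def)
      moreover have "(1 - f) * \<bar>S $ i $ j\<bar> \<le> \<bar>S $ i $ j\<bar>"
        using f0 by (simp add: algebra_simps)
      ultimately show ?thesis using nO \<open>S0' $ i $ j = 0\<close> by (simp add: D_def)
    qed
    have sumineq: "lam * l1_norm S0' + lam * (1 - f) * R \<le> (lam *\<^sub>R Z) \<bullet> H + lam * l1_norm S"
    proof -
      have "lam * l1_norm S0' + lam * (1 - f) * R = lam * (\<Sum>i\<in>UNIV. \<Sum>j\<in>UNIV. \<bar>S0' $ i $ j\<bar>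
          + (1 - f) * (if (i, j) \<in> Om then 0 else \<bar>D $ i $ j\<bar>))"
        by (simp add: l1_norm_def R_def sum.distrib sum_distrib_left distrib_left mult.assoc)
      also have "\<dots> \<le> lam * (\<Sum>i\<in>UNIV. \<Sum>j\<in>UNIV. Z $ i $ j * H $ i $ j + \<bar>S $ i $ j\<bar>)"
        using lam_pos ent by (intro mult_left_mono sum_mono) auto
      also have "\<dots> = (lam *\<^sub>R Z) \<bullet> H + lam * l1_norm S"
        by (simp add: l1_norm_def inner_vec_def sum.distrib sum_distrib_left distrib_left mult.assoc)
      finally show ?thesis .
    qed
    have "objective lam L0 S0' + \<epsilon> * (G \<bullet> G) + lam * (1 - f) * R \<le> objective lam L S"
      using nucL expand sumineq unfolding objective_def by linarith
    moreover have "R = 0 \<longrightarrow> (\<forall>i j. (i, j) \<notin> Om \<longrightarrow> S $ i $ j = S0' $ i $ j)"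
    proof (intro impI allI)
      fix i j assume "R = 0" "(i, j) \<notin> Om"
      hence "\<forall>i. (\<Sum>j\<in>UNIV. if (i, j) \<in> Om then 0 else \<bar>D $ i $ j\<bar>) = 0"
        unfolding R_def by (subst (asm) sum_nonneg_eq_0_iff) (auto intro: sum_nonneg)
      hence "\<forall>i j. (if (i, j) \<in> Om then 0 else \<bar>D $ i $ j\<bar>) = 0"
        by (subst (asm) sum_nonneg_eq_0_iff) auto
      hence "\<bar>D $ i $ j\<bar> = 0" using \<open>(i, j) \<notin> Om\<close> by (metis (full_types))
      thus "S $ i $ j = S0' $ i $ j" by (simp add: D_def)
    qed
    ultimately show ?thesis using epos R0 unfolding G_def H_def by blast
  qed
  show ?thesis
    unfolding unique_solution_def
  proof (intro conjI)
    show "feasible Obs L0 S0' L0 S0'" by (rule feas0)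
  next
    show "\<forall>L S. feasible Obs L0 S0' L S \<longrightarrow> objective lam L0 S0' \<le> objective lam L S"
    proof (intro allI impI)
    fix L S assume feas: "feasible Obs L0 S0' L S"
    from key[OF feas] obtain \<epsilon> R where e: "\<epsilon> > 0" "R \<ge> 0"
      and ineq: "objective lam L0 S0' + \<epsilon> * ((L - L0 - P_T U V (L - L0)) \<bullet> (L - L0 - P_T U V (L - L0)))
        + lam * (1 - f) * R \<le> objective lam L S" by blast
    have "0 \<le> \<epsilon> * ((L - L0 - P_T U V (L - L0)) \<bullet> (L - L0 - P_T U V (L - L0)))" using e by simp
    moreover have "0 \<le> lam * (1 - f) * R" using lam_pos f1 e by simp
    ultimately show "objective lam L0 S0' \<le> objective lam L S" using ineq by linarith
    qed
  next
    show "\<forall>L S. feasible Obs L0 S0' L S \<and> objective lam L S = objective lam L0 S0' \<longrightarrow> L = L0 \<and> S = S0'"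
    proof (intro allI impI)
    fix L S assume as: "feasible Obs L0 S0' L S \<and> objective lam L S = objective lam L0 S0'"
    hence feas: "feasible Obs L0 S0' L S" by blast
    from key[OF feas] obtain \<epsilon> R where e: "\<epsilon> > 0" "R \<ge> 0"
      and ineq: "objective lam L0 S0' + \<epsilon> * ((L - L0 - P_T U V (L - L0)) \<bullet> (L - L0 - P_T U V (L - L0)))
        + lam * (1 - f) * R \<le> objective lam L S"
      and Rimp: "R = 0 \<longrightarrow> (\<forall>i j. (i, j) \<notin> Om \<longrightarrow> S $ i $ j = S0' $ i $ j)" by blast
    define H where "H = L - L0"
    define G where "G = H - P_T U V H"
    have t1: "0 \<le> \<epsilon> * (G \<bullet> G)" using e by simp
    have t2: "0 \<le> lam * (1 - f) * R" using lam_pos f1 e by simp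
    have "\<epsilon> * (G \<bullet> G) + lam * (1 - f) * R \<le> 0" using ineq as unfolding G_def H_def by linarith
    hence "\<epsilon> * (G \<bullet> G) = 0" "lam * (1 - f) * R = 0" using t1 t2 by linarith+
    hence G0: "G = 0" and R0: "R = 0" using e lam_pos f1 by auto
    have offOm: "(i, j) \<notin> Om \<Longrightarrow> S $ i $ j = S0' $ i $ j" for i j using Rimp R0 by blast
    have HT: "P_T U V H = H" using G0 by (simp add: G_def)
    have HG: "P_idx (- Gam) H = H"
    proof -
      have "H $ i $ j = 0" if "(i, j) \<in> Gam" for i j
      proof -
        have o1: "(i, j) \<in> Obs" and o2: "(i, j) \<notin> Om" using that Gam_def by auto
        have "L $ i $ j + S $ i $ j = L0 $ i $ j + S0' $ i $ j" "S $ i $ j = S0' $ i $ j"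
          using feasible_entry[OF feas o1] offOm[OF o2] by auto
        thus ?thesis by (simp add: H_def)
      qed
      thus ?thesis by (auto simp: P_idx_def vec_eq_iff)
    qed
    have lin: "linear (\<lambda>M. P_idx (- Gam) (P_T U V M))"
      using linear_compose[OF PT_linear Pidx_linear] by (simp add: o_def)
    hence bl: "bounded_linear (\<lambda>M. P_idx (- Gam) (P_T U V M))"
      by (simp add: linear_conv_bounded_linear)
    have "norm H = norm (P_idx (- Gam) (P_T U V H))" by (simp add: HT HG)
    also have "\<dots> \<le> onorm (\<lambda>M. P_idx (- Gam) (P_T U V M)) * norm H" by (rule onorm[OF bl])
    finally have "norm H \<le> onorm (\<lambda>M. P_idx (- Gam) (P_T U V M)) * norm H" .
    hence "norm H = 0" using opnorm norm_ge_zero[of H]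
      by (metis less_eq_real_def mult_le_cancel_right1 not_le)
    hence H0: "L = L0" by (simp add: H_def)
    have "S $ i $ j = S0' $ i $ j" for i j
    proof (cases "(i, j) \<in> Om")
      case True
      hence "(i, j) \<in> Obs" using Om_sub by auto
      thus ?thesis using feasible_entry[OF feas] H0 by force
    qed (rule offOm)
    hence "S = S0'" by (simp add: vec_eq_iff)
    thus "L = L0 \<and> S = S0'" using H0 by simp
    qed
  qed
qed


end
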